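(* Let $U\subset\mathbb{R}^m$ be a bounded domain and $f\in W^{1,1}(U,\mathbb{R}^n)$. Suppose $$\inf_{\{f_j\}}\int_U\Big(\sup_j|\Lambda^kf_j|\Big)\,dx<\infty,$$ where the infimum is over all sequences $\{f_j\}\subset C^1(U,\mathbb{R}^n)$ with $\|f_j-f\|_{W^{1,1}(U)}\to0$. Then $f\in\mathcal{S}^k(U,\mathbb{R}^n)$.
   Context: For $f\in W^{1,1}(U,\mathbb{R}^n)$, $|\Lambda^kf|(x)$ is the maximum of the absolute values of all $k\times k$ minors of the Jacobian matrix $Df(x)=(\partial f_\nu/\partial x_\mu)$ ($0$ if $k>\min(m,n)$). For $\alpha=\sum_{i_1<\dots<i_k}a_{i_1\dots i_k}(y)\,dy_{i_1}\wedge\dots\wedge dy_{i_k}$ on $\mathbb{R}^n$, $f^*\alpha=\sum a_{i_1\dots i_k}(f(x))\,df_{i_1}\wedge\dots\wedge df_{i_k}$, $df_\nu=\sum_\mu\frac{\partial f_\nu}{\partial x_\mu}dx_\mu$. $C^1_b(\mathbb{R}^n,\Lambda^k)$: $C^1$ $k$-forms on $\mathbb{R}^n$ with bounded coefficients and bounded first derivatives of coefficients; $C^1_0(U,\Lambda^j)$: $C^1$ forms on $U$ with compactly supported coefficients. $\mathcal{F}^k(U,\mathbb{R}^n)=\{f\in W^{1,1}(U,\mathbb{R}^n): |\Lambda^kf|\in L^1(U)\}$. A sequence $f_j\in\mathcal{F}^k$ converges to $f\in\mathcal{F}^k$ in the $\tau^k$ topology if $f_j\to f$ in $W^{1,1}$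 and $\int_Uf_j^*\alpha\wedge\omega\to\int_Uf^*\alpha\wedge\omega$ for all $\alpha\in C^1_b(\mathbb{R}^n,\Lambda^k)$, $\omega\in C^1_0(U,\Lambda^{m-k})$. A map $f$ is $k$-stable, written $f\in\mathcal{S}^k(U,\mathbb{R}^n)$, if $f\in\mathcal{F}^k(U,\mathbb{R}^n)$ and there is a sequence $f_j\in C^1(U,\mathbb{R}^n)\cap\mathcal{F}^k(U,\mathbb{R}^n)$ converging to $f$ in the $\tau^k$ topology. *)

theory Defs
  imports "HOL-Analysis.Analysis"
begin

definition pd :: "'m::{finite,linorder} \<Rightarrow> (real^'m::{finite,linorder} \<Rightarrow> 'b::real_normed_vector) \<Rightarrow> real^'m::{finite,linorder} \<Rightarrow> 'b" where
  "pd i g x = frechet_derivative g (at x) (axis i 1)"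

definition C1_on :: "(real^'m::{finite,linorder}) set \<Rightarrow> (real^'m::{finite,linorder} \<Rightarrow> 'b::real_normed_vector) \<Rightarrow> bool" where
  "C1_on U g \<longleftrightarrow> (\<forall>x\<in>U. g differentiable (at x)) \<and> (\<forall>i. continuous_on U (pd i g))"

fun iter_pd :: "'m::{finite,linorder} list \<Rightarrow> (real^'m::{finite,linorder} \<Rightarrow> real) \<Rightarrow> real^'m::{finite,linorder} \<Rightarrow> real" where
  "iter_pd [] g = g"
| "iter_pd (i # ds) g = pd i (iter_pd ds g)"

definition smooth_on :: "(real^'m::{finite,linorder}) set \<Rightarrow> (real^'m::{finite,linorder} \<Rightarrow> real) \<Rightarrow> bool" where
  "smooth_on U g \<longleftrightarrow> (\<forall>ds. (\<forall>x\<in>U. iter_pd ds g differentiable (at x)) \<and> continuous_on U (iter_pd ds g))"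

definition compact_support_in :: "(real^'m::{finite,linorder}) set \<Rightarrow> (real^'m::{finite,linorder} \<Rightarrow> real) \<Rightarrow> bool" where
  "compact_support_in U g \<longleftrightarrow> compact (closure {x\<in>U. g x \<noteq> 0}) \<and> closure {x\<in>U. g x \<noteq> 0} \<subseteq> U"

definition test_fun :: "(real^'m::{finite,linorder}) set \<Rightarrow> (real^'m::{finite,linorder} \<Rightarrow> real) \<Rightarrow> bool" where
  "test_fun U \<phi> \<longleftrightarrow> smooth_on U \<phi> \<and> compact_support_in U \<phi>"

text \<open>Df x $ nu $ mu is the weak partial derivative of f_nu in direction x_mu.\<close>
definition W11 :: "(real^'m::{finite,linorder}) set \<Rightarrow> (real^'m::{finite,linorder} \<Rightarrow> real^'n::{finite,linorder}) \<Rightarrow> (real^'m::{finite,linorder} \<Rightarrow> real^'m::{finite,linorder}^'n::{finite,linorder}) \<Rightarrow> bool" where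
  "W11 U f Df \<longleftrightarrow> set_integrable lebesgue U f \<and> set_integrable lebesgue U Df \<and>
     (\<forall>\<phi> \<nu> \<mu>. test_fun U \<phi> \<longrightarrow>
        (LINT x:U|lebesgue. f x $ \<nu> * pd \<mu> \<phi> x) = - (LINT x:U|lebesgue. Df x $ \<nu> $ \<mu> * \<phi> x))"

definition W11_dist :: "(real^'m::{finite,linorder}) set \<Rightarrow> (real^'m::{finite,linorder} \<Rightarrow> real^'n::{finite,linorder}) \<Rightarrow> (real^'m::{finite,linorder} \<Rightarrow> real^'m::{finite,linorder}^'n::{finite,linorder})
     \<Rightarrow> (real^'m::{finite,linorder} \<Rightarrow> real^'n::{finite,linorder}) \<Rightarrow> (real^'m::{finite,linorder} \<Rightarrow> real^'m::{finite,linorder}^'n::{finite,linorder}) \<Rightarrow> real" where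
  "W11_dist U f Df g Dg = (LINT x:U|lebesgue. norm (f x - g x)) + (LINT x:U|lebesgue. norm (Df x - Dg x))"

text \<open>The minor of A with rows I and columns J (both listed increasingly), card I = card J.\<close>
definition minor :: "real^'m::{finite,linorder}^'n::{finite,linorder} \<Rightarrow> 'n set \<Rightarrow> 'm set \<Rightarrow> real" where
  "minor A I J = (let r = sorted_list_of_set I; c = sorted_list_of_set J; k = card I in
     (\<Sum>p | p permutes {..<k}. of_int (sign p) * (\<Prod>a<k. A $ (r ! a) $ (c ! p a))))"

definition Lambda_abs :: "real^'m::{finite,linorder}^'n::{finite,linorder} \<Rightarrow> nat \<Rightarrow> real" where
  "Lambda_abs A k = Max ({\<bar>minor A I J\<bar> | I J. card I = k \<and> card J = k} \<union> {0})"

definition Fk :: "nat \<Rightarrow> (real^'m::{finite,linorder}) set \<Rightarrow> (real^'m::{finite,linorder} \<Rightarrow> real^'n::{finite,linorder}) \<Rightarrow> (real^'m::{finite,linorder} \<Rightarrow> real^'m::{finite,linorder}^'n::{finite,linorder}) \<Rightarrow> bool" where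
  "Fk k U f Df \<longleftrightarrow> W11 U f Df \<and> set_integrable lebesgue U (\<lambda>x. Lambda_abs (Df x) k)"

text \<open>Sign of the permutation putting the increasing list J followed by the increasing
  list L into increasing order, i.e. dx_J \<and> dx_L = shuffle_sign J L dx_{J \<union> L} for disjoint J, L.\<close>
definition shuffle_sign :: "'m::{finite,linorder} set \<Rightarrow> 'm set \<Rightarrow> real" where
  "shuffle_sign J L = (-1) ^ card {(j, l). j \<in> J \<and> l \<in> L \<and> l < j}"

text \<open>A k-form alpha on R^n is given by coefficients alpha I (y) for card I = k
  (alpha = sum over increasing I of alpha I dy_I); an (m-k)-form omega on U by
  coefficients omega L (x) for card L = m - k. The function below is the coefficient h of
  f^* alpha \<and> omega = h dx_1 \<and> ... \<and> dx_m.\<close>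
definition pullback_wedge :: "nat \<Rightarrow> (real^'m::{finite,linorder} \<Rightarrow> real^'n::{finite,linorder}) \<Rightarrow> (real^'m::{finite,linorder} \<Rightarrow> real^'m::{finite,linorder}^'n::{finite,linorder})
     \<Rightarrow> ('n set \<Rightarrow> real^'n::{finite,linorder} \<Rightarrow> real) \<Rightarrow> ('m set \<Rightarrow> real^'m::{finite,linorder} \<Rightarrow> real) \<Rightarrow> real^'m::{finite,linorder} \<Rightarrow> real" where
  "pullback_wedge k f Df \<alpha> \<omega> x =
     (\<Sum>I | card I = k. \<Sum>J | card J = k.
        \<alpha> I (f x) * minor (Df x) I J * shuffle_sign J (- J) * \<omega> (- J) x)"

definition C1b_form :: "nat \<Rightarrow> ('n::{finite,linorder} set \<Rightarrow> real^'n::{finite,linorder} \<Rightarrow> real) \<Rightarrow> bool" where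
  "C1b_form k \<alpha> \<longleftrightarrow> (\<forall>I. card I = k \<longrightarrow>
     C1_on UNIV (\<alpha> I) \<and> bounded (range (\<alpha> I)) \<and> (\<forall>i. bounded (range (pd i (\<alpha> I)))))"

definition C10_form :: "(real^'m::{finite,linorder}) set \<Rightarrow> nat \<Rightarrow> ('m set \<Rightarrow> real^'m::{finite,linorder} \<Rightarrow> real) \<Rightarrow> bool" where
  "C10_form U j \<omega> \<longleftrightarrow> (\<forall>L. card L = j \<longrightarrow> C1_on U (\<omega> L) \<and> compact_support_in U (\<omega> L))"

definition tau_conv :: "nat \<Rightarrow> (real^'m::{finite,linorder}) set \<Rightarrow> (nat \<Rightarrow> real^'m::{finite,linorder} \<Rightarrow> real^'n::{finite,linorder})
     \<Rightarrow> (nat \<Rightarrow> real^'m::{finite,linorder} \<Rightarrow> real^'m::{finite,linorder}^'n::{finite,linorder}) \<Rightarrow> (real^'m::{finite,linorder} \<Rightarrow> real^'n::{finite,linorder}) \<Rightarrow> (real^'m::{finite,linorder} \<Rightarrow> real^'m::{finite,linorder}^'n::{finite,linorder}) \<Rightarrow> bool" where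
  "tau_conv k U fs Dfs f Df \<longleftrightarrow>
     (\<forall>j. Fk k U (fs j) (Dfs j)) \<and> Fk k U f Df \<and>
     (\<lambda>j. W11_dist U (fs j) (Dfs j) f Df) \<longlonglongrightarrow> 0 \<and>
     (\<forall>\<alpha> \<omega>. C1b_form k \<alpha> \<longrightarrow> C10_form U (CARD('m) - k) \<omega> \<longrightarrow>
        (\<lambda>j. LINT x:U|lebesgue. pullback_wedge k (fs j) (Dfs j) \<alpha> \<omega> x)
          \<longlonglongrightarrow> (LINT x:U|lebesgue. pullback_wedge k f Df \<alpha> \<omega> x))"

definition stable :: "nat \<Rightarrow> (real^'m::{finite,linorder}) set \<Rightarrow> (real^'m::{finite,linorder} \<Rightarrow> real^'n::{finite,linorder}) \<Rightarrow> (real^'m::{finite,linorder} \<Rightarrow> real^'m::{finite,linorder}^'n::{finite,linorder}) \<Rightarrow> bool" where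
  "stable k U f Df \<longleftrightarrow> Fk k U f Df \<and>
     (\<exists>fs. (\<forall>j. C1_on U (fs j)) \<and> tau_conv k U fs (\<lambda>j x. jacobian (fs j) (at x)) f Df)"

end

theory Submission imports Defs begin

lemma minor_tendsto:
  assumes "(B \<longlongrightarrow> A) F"
  shows "((\<lambda>n. minor (B n) I J) \<longlongrightarrow> minor A I J) F"
  unfolding minor_def Let_def
  by (intro tendsto_intros assms)

lemma minor_cont: "continuous_on UNIV (\<lambda>A. minor A I J)"
  unfolding minor_def Let_def
  by (intro continuous_intros)

lemma minor_meas[measurable]:
  "Df \<in> borel_measurable M \<Longrightarrow> (\<lambda>x. minor (Df x) I J) \<in> borel_measurable M"
  using measurable_comp[OF _ borel_measurable_continuous_onI[OF minor_cont], of Df M]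
  by (simp add: comp_def)

definition Pk :: "nat \<Rightarrow> ('n::{finite,linorder} set \<times> 'm::{finite,linorder} set) set" where
  "Pk k = {(I,J). card I = k \<and> card J = k}"

lemma Lambda_abs_eq:
  "Lambda_abs A k = Max ((\<lambda>i. case i of None \<Rightarrow> 0 | Some p \<Rightarrow> \<bar>minor A (fst p) (snd p)\<bar>) ` insert None (Some ` Pk k))"
  unfolding Lambda_abs_def Pk_def
  apply (rule arg_cong[where f=Max])
  apply (auto simp: image_iff) by blast+

lemma Lambda_meas[measurable]:
  "Df \<in> borel_measurable M \<Longrightarrow> (\<lambda>x. Lambda_abs (Df x) k) \<in> borel_measurable M"
  unfolding Lambda_abs_eq
  apply (rule borel_measurable_Max)
   apply simp
  apply (auto split: option.splits)
  done

lemma Lambda_fin: "finite ({\<bar>minor A I J\<bar> | I J. card I = k \<and> card J = k} \<union> {0})"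
proof -
  have "{\<bar>minor A I J\<bar> | I J. card I = k \<and> card J = k} \<subseteq> (\<lambda>(I,J). \<bar>minor A I J\<bar>) ` UNIV"
    by auto
  then have "finite {\<bar>minor A I J\<bar> | I J. card I = k \<and> card J = k}"
    by (rule finite_subset) simp
  thus ?thesis by simp
qed

lemma Lambda_nonneg: "0 \<le> Lambda_abs A k"
  unfolding Lambda_abs_def using Lambda_fin by (intro Max_ge) auto

lemma minor_le_Lambda: "card I = k \<Longrightarrow> card J = k \<Longrightarrow> \<bar>minor A I J\<bar> \<le> Lambda_abs A k"
  unfolding Lambda_abs_def using Lambda_fin by (intro Max_ge) auto

lemma Lambda_le:
  assumes "\<And>I J. card I = k \<Longrightarrow> card J = k \<Longrightarrow> \<bar>minor A I J\<bar> \<le> c" "0 \<le> c"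
  shows "Lambda_abs A k \<le> c"
  unfolding Lambda_abs_def using Lambda_fin assms by (subst Max_le_iff) auto

lemma C1_cont: "C1_on U g \<Longrightarrow> continuous_on U g"
  unfolding C1_on_def by (auto intro!: continuous_at_imp_continuous_on differentiable_imp_continuous_within)

lemma compact_support_bound:
  fixes g :: "real^'m::{finite,linorder} \<Rightarrow> real"
  assumes "C1_on U g" "compact_support_in U g"
  shows "\<exists>B\<ge>0. \<forall>x\<in>U. \<bar>g x\<bar> \<le> B"
proof -
  let ?S = "closure {x\<in>U. g x \<noteq> 0}"
  have c: "compact ?S" "?S \<subseteq> U" using assms(2) unfolding compact_support_in_def by auto
  have "continuous_on ?S g" by (rule continuous_on_subset[OF C1_cont[OF assms(1)] c(2)])
  then have "compact (g ` ?S)" using c(1) compact_continuous_image by blast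
  then have "bounded (g ` ?S)" by (rule compact_imp_bounded)
  then obtain B where B: "\<forall>y\<in>g ` ?S. norm y \<le> B" unfolding bounded_iff by blast
  show ?thesis
  proof (intro exI[of _ "max B 0"] conjI ballI)
    fix x assume "x \<in> U"
    show "\<bar>g x\<bar> \<le> max B 0"
    proof (cases "g x = 0")
      case False
      then have "x \<in> {x\<in>U. g x \<noteq> 0}" using \<open>x \<in> U\<close> by simp
      then have "x \<in> ?S" by (rule subsetD[OF closure_subset])
      then have "g x \<in> g ` ?S" by (rule imageI)
      then have "norm (g x) \<le> B" using B by blast
      then show ?thesis by simp
    qed simp
  qed simp
qed


lemma card_Compl: "card (- (A::'a::finite set)) = CARD('a) - card A"
  by (metis Compl_eq_Diff_UNIV card_Diff_subset finite subset_UNIV)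

lemma L1_sub:
  fixes g :: "nat \<Rightarrow> real^'m::{finite,linorder} \<Rightarrow> 'b::{banach,second_countable_topology}"
  assumes "\<And>n. set_integrable lebesgue U (g n)" "set_integrable lebesgue U g0"
    "(\<lambda>n. LINT x:U|lebesgue. norm (g n x - g0 x)) \<longlonglongrightarrow> 0"
  shows "\<exists>r. strict_mono r \<and> (AE x in lebesgue. x \<in> U \<longrightarrow> (\<lambda>n. g (r n) x) \<longlonglongrightarrow> g0 x)"
proof -
  define u where "u n x = indicator U x *\<^sub>R (g n x - g0 x)" for n x
  have "integrable lebesgue (u n)" for n
    using assms(1,2) unfolding u_def set_integrable_def
    by (simp add: scaleR_diff_right)
  moreover have "(\<lambda>n. \<integral>x. norm (u n x) \<partial>lebesgue) \<longlonglongrightarrow> 0"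
    using assms(3) unfolding u_def set_lebesgue_integral_def by simp
  ultimately obtain r where r: "strict_mono r" "AE x in lebesgue. (\<lambda>n. u (r n) x) \<longlonglongrightarrow> 0"
    using tendsto_L1_AE_subseq by blast
  from r(2) have "AE x in lebesgue. x \<in> U \<longrightarrow> (\<lambda>n. g (r n) x) \<longlonglongrightarrow> g0 x"
  proof eventually_elim
    case (elim x)
    show ?case
    proof
      assume "x \<in> U"
      then have "(\<lambda>n. g (r n) x - g0 x) \<longlonglongrightarrow> 0" using elim unfolding u_def by simp
      then show "(\<lambda>n. g (r n) x) \<longlonglongrightarrow> g0 x" by (rule LIM_zero_cancel)
    qed
  qed
  with r(1) show ?thesis by blast
qed

lemma shuffle_abs: "\<bar>shuffle_sign J L\<bar> = 1"
  unfolding shuffle_sign_def by simp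

lemma pw_bound:
  assumes "\<And>I y. card I = k \<Longrightarrow> \<bar>\<alpha> I y\<bar> \<le> Ba I"
    and "\<And>J. card J = k \<Longrightarrow> \<bar>\<omega> (- J) x\<bar> \<le> Bo (- J)"
    and "\<And>I. 0 \<le> Ba I" "\<And>L. 0 \<le> Bo L"
  shows "\<bar>pullback_wedge k g Dg \<alpha> \<omega> x\<bar> \<le>
     (\<Sum>I | card I = k. \<Sum>J | card J = k. Ba I * Bo (- J)) * Lambda_abs (Dg x) k"
proof -
  have "\<bar>pullback_wedge k g Dg \<alpha> \<omega> x\<bar> \<le>
     (\<Sum>I | card I = k. \<Sum>J | card J = k.
        \<bar>\<alpha> I (g x) * minor (Dg x) I J * shuffle_sign J (- J) * \<omega> (- J) x\<bar>)"
    unfolding pullback_wedge_def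
    by (rule order_trans[OF sum_abs sum_mono[OF sum_abs]])
  also have "\<dots> \<le> (\<Sum>I | card I = k. \<Sum>J | card J = k. Ba I * Bo (- J) * Lambda_abs (Dg x) k)"
  proof -
    have h: "\<bar>\<alpha> I (g x) * minor (Dg x) I J * shuffle_sign J (- J) * \<omega> (- J) x\<bar>
        \<le> Ba I * Bo (- J) * Lambda_abs (Dg x) k" if I: "card I = k" and J: "card J = k" for I J
    proof -
      have "\<bar>\<alpha> I (g x) * minor (Dg x) I J * shuffle_sign J (- J) * \<omega> (- J) x\<bar>
          = \<bar>\<alpha> I (g x)\<bar> * \<bar>minor (Dg x) I J\<bar> * \<bar>\<omega> (- J) x\<bar>"
        by (simp add: abs_mult shuffle_abs)
      also have "\<dots> \<le> Ba I * Lambda_abs (Dg x) k * Bo (- J)"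
        using assms(1)[OF I, of "g x"] assms(2)[OF J] minor_le_Lambda[OF I J, of "Dg x"] assms(3)[of I]
        by (intro mult_mono) (auto simp: Lambda_nonneg)
      finally show ?thesis by (simp add: algebra_simps)
    qed
    show ?thesis by (intro sum_mono h) simp_all
  qed
  also have "\<dots> = (\<Sum>I | card I = k. \<Sum>J | card J = k. Ba I * Bo (- J)) * Lambda_abs (Dg x) k"
    by (simp add: sum_distrib_right)
  finally show ?thesis .
qed

lemma pw_tendsto:
  assumes "\<And>I. card I = k \<Longrightarrow> continuous_on UNIV (\<alpha> I)"
    and "(\<lambda>n. g n x) \<longlonglongrightarrow> g0 x" "(\<lambda>n. Dg n x) \<longlonglongrightarrow> Dg0 x"
  shows "(\<lambda>n. pullback_wedge k (g n) (Dg n) \<alpha> \<omega> x) \<longlonglongrightarrow> pullback_wedge k g0 Dg0 \<alpha> \<omega> x"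
proof -
  have h: "(\<lambda>n. \<alpha> I (g n x)) \<longlonglongrightarrow> \<alpha> I (g0 x)" if "card I = k" for I
  proof -
    have "isCont (\<alpha> I) (g0 x)" using assms(1)[OF that] by (simp add: continuous_on_eq_continuous_at)
    then show ?thesis by (rule isCont_tendsto_compose[OF _ assms(2)])
  qed
  show ?thesis unfolding pullback_wedge_def
    by (intro tendsto_sum tendsto_mult tendsto_const minor_tendsto assms(3) h) simp_all
qed

lemma pw_ind:
  "indicator U x * pullback_wedge k g Dg \<alpha> \<omega> x =
   pullback_wedge k (\<lambda>x. indicator U x *\<^sub>R g x) (\<lambda>x. indicator U x *\<^sub>R Dg x) \<alpha> (\<lambda>L x. indicator U x * \<omega> L x) x"
  unfolding pullback_wedge_def by (cases "x \<in> U") auto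

lemma pw_meas:
  assumes "gt \<in> borel_measurable lebesgue" "Dgt \<in> borel_measurable lebesgue"
    and "\<And>I. card I = k \<Longrightarrow> continuous_on UNIV (\<alpha> I)"
    and "\<And>J. card J = k \<Longrightarrow> \<omega> (- J) \<in> borel_measurable lebesgue"
  shows "pullback_wedge k gt Dgt \<alpha> \<omega> \<in> borel_measurable lebesgue"
proof -
  have h1: "(\<lambda>x. \<alpha> I (gt x)) \<in> borel_measurable lebesgue" if "card I = k" for I
    using measurable_comp[OF assms(1) borel_measurable_continuous_onI[OF assms(3)[OF that]]]
    by (simp add: comp_def)
  show ?thesis unfolding pullback_wedge_def
    by (intro borel_measurable_sum borel_measurable_times borel_measurable_const minor_meas assms(2) h1 assms(4)) simp_all
qed

theorem mainTheorem6:
  fixes U :: "(real^'m::{finite,linorder}) set"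
    and f :: "real^'m::{finite,linorder} \<Rightarrow> real^'n::{finite,linorder}"
    and Df :: "real^'m::{finite,linorder} \<Rightarrow> real^'m::{finite,linorder}^'n::{finite,linorder}"
    and k :: nat
  assumes "open U" and "connected U" and "bounded U" and "U \<noteq> {}"
    and "W11 U f Df"
    and "\<exists>fs. (\<forall>j. C1_on U (fs j) \<and> W11 U (fs j) (\<lambda>x. jacobian (fs j) (at x))) \<and>
           (\<lambda>j. W11_dist U (fs j) (\<lambda>x. jacobian (fs j) (at x)) f Df) \<longlonglongrightarrow> 0 \<and>
           (\<integral>\<^sup>+x\<in>U. (SUP j. ennreal (Lambda_abs (jacobian (fs j) (at x)) k)) \<partial>lebesgue) < \<infinity>"
  shows "stable k U f Df"
proof -
  obtain fs where fsC: "\<And>j. C1_on U (fs j)" and fsW: "\<And>j. W11 U (fs j) (\<lambda>x. jacobian (fs j) (at x))"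
    and lim: "(\<lambda>j. W11_dist U (fs j) (\<lambda>x. jacobian (fs j) (at x)) f Df) \<longlonglongrightarrow> 0"
    and fin: "(\<integral>\<^sup>+x\<in>U. (SUP j. ennreal (Lambda_abs (jacobian (fs j) (at x)) k)) \<partial>lebesgue) < \<infinity>"
    using assms(6) by blast
  define J where "J j x = jacobian (fs j) (at x)" for j x
  have Ub: "U \<in> sets borel" using assms(1) by simp
  have Ul[measurable]: "U \<in> sets lebesgue" using Ub by simp
  have fI: "set_integrable lebesgue U f" and DfI: "set_integrable lebesgue U Df"
    using assms(5) unfolding W11_def by auto
  have fsI: "set_integrable lebesgue U (fs j)" and JI: "set_integrable lebesgue U (J j)" for j
    using fsW[of j] unfolding W11_def J_def by auto
  define A where "A j = (LINT x:U|lebesgue. norm (fs j x - f x))" for j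
  define B where "B j = (LINT x:U|lebesgue. norm (J j x - Df x))" for j
  have A0: "0 \<le> A j" and B0: "0 \<le> B j" for j
    unfolding A_def B_def set_lebesgue_integral_def by (auto intro!: integral_nonneg_AE)
  have AB: "(\<lambda>j. A j + B j) \<longlonglongrightarrow> 0"
    using lim unfolding W11_dist_def A_def B_def J_def by simp
  have Alim: "A \<longlonglongrightarrow> 0"
    by (rule tendsto_sandwich[OF _ _ tendsto_const AB]) (auto intro!: always_eventually simp: A0 B0 add_increasing2)
  have Blim: "B \<longlonglongrightarrow> 0"
    by (rule tendsto_sandwich[OF _ _ tendsto_const AB]) (auto intro!: always_eventually simp: A0 B0 add_increasing)
  obtain r1 where r1: "strict_mono r1" and r1c: "AE x in lebesgue. x \<in> U \<longrightarrow> (\<lambda>n. fs (r1 n) x) \<longlonglongrightarrow> f x"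
    using L1_sub[of U fs f, OF fsI fI] Alim unfolding A_def by blast
  have "(\<lambda>n. B (r1 n)) \<longlonglongrightarrow> 0" using LIMSEQ_subseq_LIMSEQ[OF Blim r1] by (simp add: comp_def)
  then obtain r2 where r2: "strict_mono r2" and r2c: "AE x in lebesgue. x \<in> U \<longrightarrow> (\<lambda>n. J (r1 (r2 n)) x) \<longlonglongrightarrow> Df x"
    using L1_sub[of U "\<lambda>n. J (r1 n)" Df, OF JI DfI] unfolding B_def by blast
  define r where "r = r1 \<circ> r2"
  have r: "strict_mono r" unfolding r_def using r1 r2 by (simp add: strict_mono_o)
  have conv: "AE x in lebesgue. x \<in> U \<longrightarrow> (\<lambda>n. fs (r n) x) \<longlonglongrightarrow> f x \<and> (\<lambda>n. J (r n) x) \<longlonglongrightarrow> Df x"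
    using r1c r2c
  proof eventually_elim
    case (elim x)
    show ?case
    proof
      assume "x \<in> U"
      then show "(\<lambda>n. fs (r n) x) \<longlonglongrightarrow> f x \<and> (\<lambda>n. J (r n) x) \<longlonglongrightarrow> Df x"
        using elim LIMSEQ_subseq_LIMSEQ[OF _ r2, of "\<lambda>n. fs (r1 n) x"]
        unfolding r_def by (auto simp: comp_def)
    qed
  qed
  define Jt where "Jt j x = indicator U x *\<^sub>R J j x" for j x
  have Jtm[measurable]: "Jt j \<in> borel_measurable lebesgue" for j
    using JI[of j] unfolding set_integrable_def Jt_def by auto
  define Gt where "Gt x = (SUP j. ennreal (Lambda_abs (Jt j x) k)) * indicator U x" for x
  have Gtm[measurable]: "Gt \<in> borel_measurable lebesgue" unfolding Gt_def
    by measurable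
  have Gt_eq: "Gt x = (SUP j. ennreal (Lambda_abs (J j x) k)) * indicator U x" for x
    unfolding Gt_def Jt_def by (cases "x \<in> U") auto
  have Gtfin: "integral\<^sup>N lebesgue Gt < \<infinity>" using fin unfolding Gt_eq J_def by simp
  have GtAE: "AE x in lebesgue. Gt x \<noteq> \<infinity>"
    using nn_integral_PInf_AE[OF Gtm] Gtfin by auto
  define w where "w x = enn2real (Gt x)" for x
  have w0: "0 \<le> w x" for x unfolding w_def by simp
  have wm[measurable]: "w \<in> borel_measurable lebesgue" unfolding w_def by measurable
  have wI: "integrable lebesgue w"
  proof (rule integrableI_nonneg)
    show "AE x in lebesgue. 0 \<le> w x" using w0 by simp
    have "(\<integral>\<^sup>+x. ennreal (w x) \<partial>lebesgue) \<le> integral\<^sup>N lebesgue Gt"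
      unfolding w_def by (intro nn_integral_mono) (simp add: ennreal_enn2real_if)
    then show "(\<integral>\<^sup>+x. ennreal (w x) \<partial>lebesgue) < \<infinity>" using Gtfin by simp
  qed (rule wm)
  have bnd: "AE x in lebesgue. x \<in> U \<longrightarrow> (\<forall>j. Lambda_abs (J j x) k \<le> w x)"
    using GtAE
  proof eventually_elim
    case (elim x)
    show ?case
    proof (intro impI allI)
      fix j assume xU: "x \<in> U"
      then have G: "Gt x = (SUP j. ennreal (Lambda_abs (J j x) k))" unfolding Gt_eq by simp
      have "ennreal (Lambda_abs (J j x) k) \<le> Gt x" unfolding G by (rule SUP_upper) simp
      then have "enn2real (ennreal (Lambda_abs (J j x) k)) \<le> enn2real (Gt x)"
        using elim by (intro enn2real_mono) (auto simp: top.not_eq_extremum)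
      moreover have "enn2real (ennreal (Lambda_abs (J j x) k)) = Lambda_abs (J j x) k"
        by (rule enn2real_ennreal[OF Lambda_nonneg])
      ultimately show "Lambda_abs (J j x) k \<le> w x" unfolding w_def by simp
    qed
  qed
  have bndf: "AE x in lebesgue. x \<in> U \<longrightarrow> Lambda_abs (Df x) k \<le> w x"
    using bnd conv
  proof eventually_elim
    case (elim x)
    show ?case
    proof
      assume xU: "x \<in> U"
      show "Lambda_abs (Df x) k \<le> w x"
      proof (rule Lambda_le[OF _ w0])
        fix I :: "'n set" and L :: "'m set" assume "card I = k" "card L = k"
        have "(\<lambda>n. \<bar>minor (J (r n) x) I L\<bar>) \<longlonglongrightarrow> \<bar>minor (Df x) I L\<bar>"
          using elim xU by (intro tendsto_rabs minor_tendsto) auto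
        moreover have "\<bar>minor (J (r n) x) I L\<bar> \<le> w x" for n
        proof -
          have "Lambda_abs (J (r n) x) k \<le> w x" using elim xU by blast
          then show ?thesis
            using minor_le_Lambda[OF \<open>card I = k\<close> \<open>card L = k\<close>, of "J (r n) x"] by linarith
        qed
        ultimately show "\<bar>minor (Df x) I L\<bar> \<le> w x" by (intro LIMSEQ_le_const2) auto
      qed
    qed
  qed
  have FkJ: "Fk k U (fs (r j)) (J (r j))" for j
    unfolding Fk_def
  proof
    show "W11 U (fs (r j)) (J (r j))" using fsW unfolding J_def by simp
    show "set_integrable lebesgue U (\<lambda>x. Lambda_abs (J (r j) x) k)"
      unfolding set_integrable_def
    proof (rule Bochner_Integration.integrable_bound[OF wI])
      have "(\<lambda>x. indicator U x *\<^sub>R Lambda_abs (J (r j) x) k) = (\<lambda>x. indicator U x * Lambda_abs (Jt (r j) x) k)"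
        unfolding Jt_def by (auto simp: fun_eq_iff indicator_def)
      then show "(\<lambda>x. indicator U x *\<^sub>R Lambda_abs (J (r j) x) k) \<in> borel_measurable lebesgue"
        by (simp add: Ul)
      show "AE x in lebesgue. norm (indicator U x *\<^sub>R Lambda_abs (J (r j) x) k) \<le> norm (w x)"
        using bnd by eventually_elim (auto simp: indicator_def Lambda_nonneg w0)
    qed
  qed
  define Dft where "Dft x = indicator U x *\<^sub>R Df x" for x
  have Dftm[measurable]: "Dft \<in> borel_measurable lebesgue"
    using DfI unfolding set_integrable_def Dft_def by auto
  define ft where "ft x = indicator U x *\<^sub>R f x" for x
  have ftm[measurable]: "ft \<in> borel_measurable lebesgue"
    using fI unfolding set_integrable_def ft_def by auto
  have Fkf: "Fk k U f Df"
    unfolding Fk_def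
  proof
    show "W11 U f Df" by (rule assms(5))
    show "set_integrable lebesgue U (\<lambda>x. Lambda_abs (Df x) k)"
      unfolding set_integrable_def
    proof (rule Bochner_Integration.integrable_bound[OF wI])
      have "(\<lambda>x. indicator U x *\<^sub>R Lambda_abs (Df x) k) = (\<lambda>x. indicator U x * Lambda_abs (Dft x) k)"
        unfolding Dft_def by (auto simp: fun_eq_iff indicator_def)
      then show "(\<lambda>x. indicator U x *\<^sub>R Lambda_abs (Df x) k) \<in> borel_measurable lebesgue"
        by (simp add: Ul)
      show "AE x in lebesgue. norm (indicator U x *\<^sub>R Lambda_abs (Df x) k) \<le> norm (w x)"
        using bndf by eventually_elim (auto simp: indicator_def Lambda_nonneg w0)
    qed
  qed
  have pwc: "(\<lambda>j. LINT x:U|lebesgue. pullback_wedge k (fs (r j)) (J (r j)) \<alpha> \<omega> x)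
          \<longlonglongrightarrow> (LINT x:U|lebesgue. pullback_wedge k f Df \<alpha> \<omega> x)"
    if \<alpha>: "C1b_form k \<alpha>" and \<omega>: "C10_form U (CARD('m) - k) \<omega>" for \<alpha> \<omega>
  proof -
    have \<alpha>c: "continuous_on UNIV (\<alpha> I)" if "card I = k" for I
      using \<alpha> that unfolding C1b_form_def by (auto intro: C1_cont)
    have exB: "\<forall>I. \<exists>b. card I = k \<longrightarrow> 0 \<le> b \<and> (\<forall>y. \<bar>\<alpha> I y\<bar> \<le> b)"
    proof
      fix I show "\<exists>b. card I = k \<longrightarrow> 0 \<le> b \<and> (\<forall>y. \<bar>\<alpha> I y\<bar> \<le> b)"
      proof (cases "card I = k")
        case True
        then have "bounded (range (\<alpha> I))" using \<alpha> unfolding C1b_form_def by auto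
        then obtain b where "\<forall>y\<in>range (\<alpha> I). norm y \<le> b" unfolding bounded_iff by blast
        then have "norm (\<alpha> I y) \<le> b" for y by simp
        then have "\<bar>\<alpha> I y\<bar> \<le> max b 0" for y by (simp add: le_max_iff_disj)
        then show ?thesis by (intro exI[of _ "max b 0"]) simp
      qed simp
    qed
    obtain Ba where Ba0: "\<forall>I. card I = k \<longrightarrow> 0 \<le> Ba I \<and> (\<forall>y. \<bar>\<alpha> I y\<bar> \<le> Ba I)"
      using choice[OF exB] by blast
    have Ba: "0 \<le> Ba I \<and> (\<forall>y. \<bar>\<alpha> I y\<bar> \<le> Ba I)" if "card I = k" for I
      using Ba0 that by blast
    have cJ: "card (- L) = CARD('m) - k" if "card L = k" for L :: "'m set"
      using that by (simp add: card_Compl)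
    have exO: "\<forall>L. \<exists>b. card L = k \<longrightarrow> 0 \<le> b \<and> (\<forall>x\<in>U. \<bar>\<omega> (- L) x\<bar> \<le> b)"
    proof
      fix L :: "'m set" show "\<exists>b. card L = k \<longrightarrow> 0 \<le> b \<and> (\<forall>x\<in>U. \<bar>\<omega> (- L) x\<bar> \<le> b)"
      proof (cases "card L = k")
        case True
        have "C1_on U (\<omega> (- L))" "compact_support_in U (\<omega> (- L))"
          using \<omega> cJ[OF True] unfolding C10_form_def by auto
        then obtain b where "b \<ge> 0" "\<forall>x\<in>U. \<bar>\<omega> (- L) x\<bar> \<le> b"
          using compact_support_bound by blast
        then show ?thesis by blast
      qed simp
    qed
    obtain Bo00 where Bo00: "\<forall>L. card L = k \<longrightarrow> 0 \<le> Bo00 L \<and> (\<forall>x\<in>U. \<bar>\<omega> (- L) x\<bar> \<le> Bo00 L)"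
      using choice[OF exO] by blast
    define Bo where "Bo M = (if card (- M) = k then max 0 (Bo00 (- M)) else 0)" for M :: "'m set"
    define Ba' where "Ba' I = (if card I = k then Ba I else 0)" for I
    have Bo_ok: "\<bar>\<omega> (- L) x\<bar> \<le> Bo (- L)" if "card L = k" "x \<in> U" for L x
    proof -
      have "\<bar>\<omega> (- L) x\<bar> \<le> Bo00 L" using Bo00 that by blast
      then show ?thesis using that(1) by (simp add: Bo_def)
    qed
    have a1: "\<bar>\<alpha> I y\<bar> \<le> Ba' I" if "card I = k" for I y
      using Ba[OF that] that unfolding Ba'_def by simp
    have a3: "0 \<le> Ba' I" for I using Ba unfolding Ba'_def by simp
    have a4: "0 \<le> Bo M" for M unfolding Bo_def by simp
    define C where "C = (\<Sum>I | card I = k. \<Sum>L | card L = k. Ba' I * Bo (- L))"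
    have C0: "0 \<le> C" unfolding C_def
      by (intro sum_nonneg mult_nonneg_nonneg a3 a4)
    have pwb: "\<bar>pullback_wedge k g Dg \<alpha> \<omega> x\<bar> \<le> C * Lambda_abs (Dg x) k" if "x \<in> U" for g Dg x
      unfolding C_def
      by (rule pw_bound[where Ba=Ba' and Bo=Bo and \<alpha>=\<alpha> and \<omega>=\<omega> and k=k and x=x, OF a1 Bo_ok[OF _ that] a3 a4])
    define \<omega>t where "\<omega>t L x = indicator U x * \<omega> L x" for L x
    have \<omega>m: "\<omega>t (- L) \<in> borel_measurable lebesgue" if "card L = k" for L
    proof -
      have "continuous_on U (\<omega> (- L))" using \<omega> cJ[OF that] unfolding C10_form_def by (auto intro: C1_cont)
      then have "(\<lambda>x. indicator U x *\<^sub>R \<omega> (- L) x) \<in> borel_measurable borel"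
        by (rule borel_measurable_continuous_on_indicator[OF Ub])
      then have "(\<lambda>x. indicator U x *\<^sub>R \<omega> (- L) x) \<in> borel_measurable lebesgue"
        using measurable_comp[OF id_borel_measurable_lebesgue] by (auto simp: comp_def)
      then show ?thesis unfolding \<omega>t_def by simp
    qed
    define s where "s j x = indicator U x * pullback_wedge k (fs (r j)) (J (r j)) \<alpha> \<omega> x" for j x
    define s0 where "s0 x = indicator U x * pullback_wedge k f Df \<alpha> \<omega> x" for x
    have sm: "s j \<in> borel_measurable lebesgue" for j
    proof -
      have "s j = pullback_wedge k (\<lambda>x. indicator U x *\<^sub>R fs (r j) x) (Jt (r j)) \<alpha> \<omega>t"
        unfolding s_def Jt_def \<omega>t_def by (rule ext, rule pw_ind)
      moreover have "(\<lambda>x. indicator U x *\<^sub>R fs (r j) x) \<in> borel_measurable lebesgue"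
        using fsI[of "r j"] unfolding set_integrable_def by auto
      ultimately show ?thesis using pw_meas[where k=k and \<alpha>=\<alpha> and \<omega>=\<omega>t, OF _ Jtm[of "r j"] \<alpha>c \<omega>m] by simp
    qed
    have s0m: "s0 \<in> borel_measurable lebesgue"
    proof -
      have "s0 = pullback_wedge k ft Dft \<alpha> \<omega>t"
        unfolding s0_def ft_def Dft_def \<omega>t_def by (rule ext, rule pw_ind)
      then show ?thesis using pw_meas[where k=k and \<alpha>=\<alpha> and \<omega>=\<omega>t, OF ftm Dftm \<alpha>c \<omega>m] by simp
    qed
    have "(\<lambda>j. integral\<^sup>L lebesgue (s j)) \<longlonglongrightarrow> integral\<^sup>L lebesgue s0"
    proof (rule integral_dominated_convergence[OF s0m sm integrable_mult_right[OF wI, of C]])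
      show "AE x in lebesgue. (\<lambda>j. s j x) \<longlonglongrightarrow> s0 x"
        using conv
      proof eventually_elim
        case (elim x)
        show ?case
        proof (cases "x \<in> U")
          case True
          then show ?thesis unfolding s_def s0_def using elim
            by (intro tendsto_mult tendsto_const pw_tendsto[OF \<alpha>c]) auto
        qed (simp add: s_def s0_def)
      qed
      show "AE x in lebesgue. norm (s j x) \<le> C * w x" for j
        using bnd
      proof eventually_elim
        case (elim x)
        show ?case
        proof (cases "x \<in> U")
          case True
          then have "\<bar>pullback_wedge k (fs (r j)) (J (r j)) \<alpha> \<omega> x\<bar> \<le> C * Lambda_abs (J (r j) x) k"
            by (rule pwb)
          also have "\<dots> \<le> C * w x" using elim True C0 by (intro mult_left_mono) auto
          finally show ?thesis using True unfolding s_def by simp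
        qed (simp add: s_def C0 w0)
      qed
    qed
    then show ?thesis unfolding s_def s0_def set_lebesgue_integral_def by simp
  qed
  show ?thesis
    unfolding stable_def
  proof (intro conjI exI[of _ "\<lambda>j. fs (r j)"] allI)
    show "Fk k U f Df" by (rule Fkf)
    show "C1_on U (fs (r j))" for j by (rule fsC)
    show "tau_conv k U (\<lambda>j. fs (r j)) (\<lambda>j x. jacobian (fs (r j)) (at x)) f Df"
      unfolding tau_conv_def
    proof (intro conjI allI impI)
      show "Fk k U (fs (r j)) (\<lambda>x. jacobian (fs (r j)) (at x))" for j
        using FkJ[of j] unfolding J_def by simp
      show "Fk k U f Df" by (rule Fkf)
      show "(\<lambda>j. W11_dist U (fs (r j)) (\<lambda>x. jacobian (fs (r j)) (at x)) f Df) \<longlonglongrightarrow> 0"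
        using LIMSEQ_subseq_LIMSEQ[OF lim r] by (simp add: comp_def)
      show "(\<lambda>j. LINT x:U|lebesgue. pullback_wedge k (fs (r j)) (\<lambda>x. jacobian (fs (r j)) (at x)) \<alpha> \<omega> x)
          \<longlonglongrightarrow> (LINT x:U|lebesgue. pullback_wedge k f Df \<alpha> \<omega> x)"
        if "C1b_form k \<alpha>" "C10_form U (CARD('m) - k) \<omega>" for \<alpha> \<omega>
        using pwc[OF that] unfolding J_def by simp
    qed
  qed
qed

end
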